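(* Let $q(k)=Q[q_{0,0}(k)]$ for $k\in\mathbb N$. Then for all $s\in[0,1]$ and $t\in\mathbb N$, $$P[s^{|B_t|}]\ge(\underbrace{\hat q\circ\cdots\circ\hat q}_{t})(s).$$
   Context: BRWRE on $\mathbb Z^d$, with $\mathbb N=\{0,1,\dots\}$. The environment $\mathbf q=(q_{t,x})_{(t,x)\in\mathbb N\times\mathbb Z^d}$ consists of probability measures on $\mathbb N$, i.i.d. under $Q$. Given $\mathbf q$, under $P^{\mathbf q}$ one particle starts at the origin at time $0$. A particle at $(t,x)$ jumps to a uniformly chosen nearest neighbour of $x$ and there dies, leaving $k$ children with probability $q_{t,x}(k)$; all independently. $B_t$ is the set of particles at time $t$, and $P=\int Q(d\mathbf q)P^{\mathbf q}$. For a probability measure $q$ on $\mathbb N$, $\hat q(s)=\sum_{k\ge0}s^kq(k)$ (with $0^0=1$). *)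

theory Defs
  imports "HOL-Probability.Probability"
begin

text \<open>Lattice Z^d is modelled as int^'d for a finite index type 'd (d = CARD('d)).\<close>

definition nbr_steps :: "((int ^ 'd)) set" where
  "nbr_steps = range (\<lambda>i. axis i 1) \<union> range (\<lambda>i. - axis i 1)"

definition offspring_measure :: "(nat \<Rightarrow> real) \<Rightarrow> nat measure" where
  "offspring_measure p = density (count_space UNIV) (\<lambda>k. ennreal (p k))"

text \<open>Quenched law P^q: for every space-time point (t,x) and every index i
  (the i-th particle at (t,x)) an independent pair (jump, number of children),
  the jump uniform on the 2d unit steps, the number of children with law q_{t,x}.\<close>
definition quenched_law ::
  "(nat \<times> (int ^ 'd) \<Rightarrow> nat \<Rightarrow> real) \<Rightarrow> (nat \<times> (int ^ 'd) \<times> nat \<Rightarrow> (int ^ 'd) \<times> nat) measure" where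
  "quenched_law q = PiM UNIV (\<lambda>(t, x, i).
      measure_pmf (pmf_of_set nbr_steps) \<Otimes>\<^sub>M offspring_measure (q (t, x)))"

primrec occ :: "(nat \<times> (int ^ 'd) \<times> nat \<Rightarrow> (int ^ 'd) \<times> nat) \<Rightarrow> nat \<Rightarrow> (int ^ 'd) \<Rightarrow> nat" where
  "occ \<omega> 0 = (\<lambda>x. if x = 0 then 1 else 0)"
| "occ \<omega> (Suc t) = (\<lambda>y. \<Sum>x\<in>{x. occ \<omega> t x \<noteq> 0}. \<Sum>i<occ \<omega> t x.
      (if x + fst (\<omega> (t, x, i)) = y then snd (\<omega> (t, x, i)) else 0))"

definition pop :: "(nat \<times> (int ^ 'd) \<times> nat \<Rightarrow> (int ^ 'd) \<times> nat) \<Rightarrow> nat \<Rightarrow> nat" where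
  "pop \<omega> t = (\<Sum>x\<in>{x. occ \<omega> t x \<noteq> 0}. occ \<omega> t x)"

definition annealed_gf ::
  "(nat \<times> (int ^ 'd) \<Rightarrow> nat \<Rightarrow> real) measure \<Rightarrow> nat \<Rightarrow> real \<Rightarrow> ennreal" where
  "annealed_gf Q t s =
     (\<integral>\<^sup>+ q. (\<integral>\<^sup>+ \<omega>. ennreal (s ^ pop \<omega> t) \<partial>quenched_law q) \<partial>Q)"

definition mean_offspring :: "(nat \<times> (int ^ 'd) \<Rightarrow> nat \<Rightarrow> real) measure \<Rightarrow> nat \<Rightarrow> real" where
  "mean_offspring Q k = (\<integral> q. q (0, 0) k \<partial>Q)"

text \<open>Generating function hat q(s) = sum_k s^k q(k) (with 0^0 = 1).\<close>
definition pgf :: "(nat \<Rightarrow> real) \<Rightarrow> real \<Rightarrow> real" where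
  "pgf p s = (\<Sum>k. s ^ k * p k)"

end

theory Submission
  imports Defs "HOL-Library.Function_Algebras"
begin


lemma PiM_coord_indep:
  assumes M: "\<And>i. i \<in> I \<Longrightarrow> prob_space (M i)" and I: "I \<noteq> {}"
  shows "prob_space.indep_vars (PiM I M) M (\<lambda>i \<omega>. \<omega> i) I"
proof -
  interpret P: prob_space "PiM I M" using M by (rule prob_space_PiM)
  have "distr (PiM I M) (PiM I M) (\<lambda>x. \<lambda>i\<in>I. x i) = distr (PiM I M) (PiM I M) (\<lambda>x. x)"
    by (rule distr_cong) (auto simp: space_PiM)
  also have "\<dots> = PiM I M" by simp
  also have "\<dots> = PiM I (\<lambda>i. distr (PiM I M) (M i) (\<lambda>\<omega>. \<omega> i))"
    by (rule PiM_cong) (auto simp: distr_PiM_component M)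
  finally show ?thesis
    by (subst P.indep_vars_iff_distr_eq_PiM'[OF I]) auto
qed

lemma distr_restrict_PiM:
  assumes M: "\<And>i. i \<in> I \<Longrightarrow> prob_space (M i)" and J: "J \<subseteq> I"
  shows "distr (PiM I M) (PiM J M) (\<lambda>\<omega>. restrict \<omega> J) = PiM J M"
proof -
  have "id \<in> J \<rightarrow> I" using J by auto
  then show ?thesis using distr_PiM_reindex[of I M id J] M J by (auto simp: restrict_def)
qed

lemma split_PiM:
  assumes M: "\<And>i. i \<in> I \<Longrightarrow> prob_space (M i)" and J: "J \<subseteq> I" and I: "I \<noteq> {}"
    and h: "h \<in> borel_measurable (PiM J M \<Otimes>\<^sub>M PiM (I - J) M)"
  shows "(\<integral>\<^sup>+\<omega>. h (restrict \<omega> J, restrict \<omega> (I - J)) \<partial>PiM I M)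
       = (\<integral>\<^sup>+a. \<integral>\<^sup>+b. h (a, b) \<partial>PiM (I - J) M \<partial>PiM J M)"
proof -
  interpret P: prob_space "PiM I M" using M by (rule prob_space_PiM)
  interpret PJ: prob_space "PiM J M" using M J by (intro prob_space_PiM) auto
  interpret PJ': prob_space "PiM (I - J) M" using M by (intro prob_space_PiM) auto
  interpret PP: pair_sigma_finite "PiM J M" "PiM (I - J) M" ..
  have ind: "P.indep_var (PiM J M) (\<lambda>\<omega>. restrict (\<lambda>i. \<omega> i) J) (PiM (I - J) M) (\<lambda>\<omega>. restrict (\<lambda>i. \<omega> i) (I - J))"
    by (rule P.indep_var_restrict[OF PiM_coord_indep[OF M I]]) (use J in auto)
  have eq: "PiM J M \<Otimes>\<^sub>M PiM (I - J) M = distr (PiM I M) (PiM J M \<Otimes>\<^sub>M PiM (I - J) M) (\<lambda>\<omega>. (restrict \<omega> J, restrict \<omega> (I - J)))"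
  proof -
    have d1: "distr (PiM I M) (PiM J M) (\<lambda>\<omega>. restrict (\<lambda>i. \<omega> i) J) = PiM J M"
      using distr_restrict_PiM[OF M J] by simp
    have d2: "distr (PiM I M) (PiM (I - J) M) (\<lambda>\<omega>. restrict (\<lambda>i. \<omega> i) (I - J)) = PiM (I - J) M"
      using distr_restrict_PiM[of I M "I - J"] M by simp
    show ?thesis using ind[unfolded P.indep_var_distribution_eq] unfolding d1 d2 by simp
  qed
  have "(\<integral>\<^sup>+\<omega>. h (restrict \<omega> J, restrict \<omega> (I - J)) \<partial>PiM I M)
      = (\<integral>\<^sup>+z. h z \<partial>distr (PiM I M) (PiM J M \<Otimes>\<^sub>M PiM (I - J) M) (\<lambda>\<omega>. (restrict \<omega> J, restrict \<omega> (I - J))))"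
    by (subst nn_integral_distr) (use h J in \<open>auto intro!: measurable_Pair measurable_restrict_subset\<close>)
  also have "\<dots> = integral\<^sup>N (PiM J M \<Otimes>\<^sub>M PiM (I - J) M) h" by (simp add: eq[symmetric])
  also have "\<dots> = (\<integral>\<^sup>+a. \<integral>\<^sup>+b. h (a, b) \<partial>PiM (I - J) M \<partial>PiM J M)"
    by (rule PJ'.nn_integral_fst[symmetric, OF h])
  finally show ?thesis .
qed

lemma restrict_int_PiM:
  assumes M: "\<And>i. i \<in> I \<Longrightarrow> prob_space (M i)" and J: "J \<subseteq> I"
    and h: "h \<in> borel_measurable (PiM J M)"
  shows "(\<integral>\<^sup>+\<omega>. h (restrict \<omega> J) \<partial>PiM I M) = (\<integral>\<^sup>+a. h a \<partial>PiM J M)"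
proof -
  have "(\<integral>\<^sup>+\<omega>. h (restrict \<omega> J) \<partial>PiM I M) = (\<integral>\<^sup>+a. h a \<partial>distr (PiM I M) (PiM J M) (\<lambda>\<omega>. restrict \<omega> J))"
    by (subst nn_integral_distr) (use h J in \<open>auto intro!: measurable_restrict_subset\<close>)
  then show ?thesis by (simp add: distr_restrict_PiM[OF M J])
qed

lemma prod_int_PiM:
  assumes M: "\<And>i. i \<in> I \<Longrightarrow> prob_space (M i)" and I: "I \<noteq> {}" and D: "finite D" "D \<subseteq> I"
    and f: "\<And>i. i \<in> D \<Longrightarrow> f i \<in> borel_measurable (M i)"
  shows "(\<integral>\<^sup>+\<omega>. (\<Prod>i\<in>D. f i (\<omega> i)) \<partial>PiM I M) = (\<Prod>i\<in>D. \<integral>\<^sup>+x. f i x \<partial>M i)"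
proof -
  interpret P: prob_space "PiM I M" using M by (rule prob_space_PiM)
  have ind: "P.indep_vars (\<lambda>_. borel) (\<lambda>i \<omega>. f i (\<omega> i)) D"
    by (rule P.indep_vars_compose2[OF P.indep_vars_subset[OF PiM_coord_indep[OF M I] D(2)]])
       (use f in auto)
  have "(\<integral>\<^sup>+\<omega>. (\<Prod>i\<in>D. f i (\<omega> i)) \<partial>PiM I M) = (\<Prod>i\<in>D. \<integral>\<^sup>+\<omega>. f i (\<omega> i) \<partial>PiM I M)"
    by (rule P.indep_vars_nn_integral[OF D(1) ind]) auto
  also have "\<dots> = (\<Prod>i\<in>D. \<integral>\<^sup>+x. f i x \<partial>M i)"
  proof (rule prod.cong[OF refl])
    fix i assume i: "i \<in> D"
    have "(\<integral>\<^sup>+\<omega>. f i (\<omega> i) \<partial>PiM I M) = (\<integral>\<^sup>+x. f i x \<partial>distr (PiM I M) (M i) (\<lambda>\<omega>. \<omega> i))"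
      by (subst nn_integral_distr) (use i D f in auto)
    then show "(\<integral>\<^sup>+\<omega>. f i (\<omega> i) \<partial>PiM I M) = (\<integral>\<^sup>+x. f i x \<partial>M i)"
      using i D by (simp add: distr_PiM_component M subset_iff)
  qed
  finally show ?thesis .
qed



definition Unif :: "real measure" where "Unif = uniform_measure lborel {0<..<1}"
definition cum :: "(nat \<Rightarrow> real) \<Rightarrow> nat \<Rightarrow> real" where "cum p n = (\<Sum>j<n. p j)"
definition Kinv :: "(nat \<Rightarrow> real) \<Rightarrow> real \<Rightarrow> nat" where
  "Kinv p v = (LEAST k. v < cum p (Suc k))"

lemma prob_space_Unif: "prob_space Unif"
  unfolding Unif_def by (rule prob_space_uniform_measure) auto

lemma sets_Unif[simp, measurable_cong]: "sets Unif = sets borel"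
  by (simp add: Unif_def)

lemma space_Unif[simp]: "space Unif = UNIV"
  by (simp add: Unif_def)

lemma emeasure_Unif: "A \<in> sets borel \<Longrightarrow> emeasure Unif A = emeasure lborel ({0<..<1} \<inter> A)"
  by (simp add: Unif_def divide_ennreal_def)

lemma cum_Suc: "cum p (Suc k) = cum p k + p k"
  by (simp add: cum_def)

lemma cum_mono:
  assumes "\<forall>k. 0 \<le> p k" "m \<le> n" shows "cum p m \<le> cum p n"
  unfolding cum_def using assms by (intro sum_mono2) auto

lemma cum_le_1:
  assumes "\<forall>k. 0 \<le> p k" "p sums 1" shows "cum p n \<le> 1"
proof -
  have "incseq (cum p)" using assms(1) by (auto simp: incseq_def intro: cum_mono)
  moreover have "cum p \<longlonglongrightarrow> 1" using assms(2) by (simp add: sums_def cum_def[abs_def])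
  ultimately show ?thesis by (rule incseq_le)
qed

lemma Kinv_eq_iff:
  assumes p: "\<forall>k. 0 \<le> p k" "p sums 1" and v: "0 < v" "v < 1"
  shows "Kinv p v = k \<longleftrightarrow> cum p k \<le> v \<and> v < cum p (Suc k)"
proof -
  have lim: "cum p \<longlonglongrightarrow> 1" using p(2) by (simp add: sums_def cum_def[abs_def])
  then have "eventually (\<lambda>n. v < cum p n) sequentially"
    using v by (simp add: order_tendstoD(1))
  then obtain n where n: "v < cum p n" by (auto simp: eventually_sequentially)
  have "n \<noteq> 0" using n v by (cases n) (auto simp: cum_def)
  then have ex: "\<exists>k. v < cum p (Suc k)" using n by (cases n) auto
  let ?L = "LEAST k. v < cum p (Suc k)"
  have L1: "v < cum p (Suc ?L)" using ex by (rule LeastI_ex)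
  have L2: "\<And>j. j < ?L \<Longrightarrow> \<not> v < cum p (Suc j)" by (rule not_less_Least)
  have L3: "cum p ?L \<le> v"
  proof (cases ?L)
    case 0 then show ?thesis using v by (simp add: cum_def)
  next
    case (Suc j) then show ?thesis using L2[of j] by auto
  qed
  show ?thesis
  proof
    assume "Kinv p v = k" then show "cum p k \<le> v \<and> v < cum p (Suc k)"
      using L1 L3 by (simp add: Kinv_def)
  next
    assume k: "cum p k \<le> v \<and> v < cum p (Suc k)"
    have "?L \<le> k" using k by (intro Least_le) auto
    moreover have "\<not> ?L < k"
    proof
      assume "?L < k"
      then have "cum p (Suc ?L) \<le> cum p k" using p by (intro cum_mono) auto
      then show False using L1 k by auto
    qed
    ultimately show "Kinv p v = k" by (simp add: Kinv_def)
  qed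
qed

lemma measurable_cum[measurable]:
  "(\<lambda>p. cum p n) \<in> borel_measurable (PiM UNIV (\<lambda>_::nat. borel :: real measure))"
  unfolding cum_def by measurable

lemma measurable_Kinv_pair[measurable]:
  "(\<lambda>(p, v). Kinv p v) \<in> measurable (PiM UNIV (\<lambda>_::nat. borel :: real measure) \<Otimes>\<^sub>M borel) (count_space UNIV)"
  unfolding Kinv_def by measurable

lemma measurable_Kinv[measurable]:
  "Kinv p \<in> measurable borel (count_space UNIV)"
  unfolding Kinv_def cum_def by measurable

lemma emeasure_Unif_Kinv:
  assumes p: "\<forall>k. 0 \<le> p k" "p sums 1"
  shows "emeasure Unif (Kinv p -` {k}) = ennreal (p k)"
proof -
  let ?a = "cum p k" and ?b = "cum p (Suc k)"
  have ab: "0 \<le> ?a" "?a \<le> ?b" "?b \<le> 1"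
    using p cum_mono[of p 0 k] cum_le_1[OF p, of "Suc k"] cum_mono[of p k "Suc k"] by (auto simp: cum_def)
  have set: "{0<..<1} \<inter> Kinv p -` {k} = {0<..<1} \<inter> {?a..<?b}"
  proof (intro set_eqI iffI)
    fix x assume "x \<in> {0<..<1} \<inter> Kinv p -` {k}"
    then show "x \<in> {0<..<1} \<inter> {?a..<?b}" using Kinv_eq_iff[OF p, of x k] by auto
  next
    fix x assume "x \<in> {0<..<1} \<inter> {?a..<?b}"
    then show "x \<in> {0<..<1} \<inter> Kinv p -` {k}" using Kinv_eq_iff[OF p, of x k] by auto
  qed
  have s1: "{?a<..<?b} \<subseteq> {0<..<1} \<inter> {?a..<?b}" using ab by auto
  have s2: "{0<..<1} \<inter> {?a..<?b} \<subseteq> {?a..<?b}" by auto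
  have "emeasure lborel ({0<..<1} \<inter> {?a..<?b}) = ennreal (?b - ?a)"
    using emeasure_mono[OF s1, of lborel] emeasure_mono[OF s2, of lborel] ab
    by (auto intro: antisym)
  moreover have "Kinv p -` {k} \<in> sets borel"
    using measurable_sets[OF measurable_Kinv[of p], of "{k}"] by simp
  ultimately show ?thesis
    by (simp add: emeasure_Unif set cum_Suc)
qed

lemma emeasure_offspring_singleton:
  "emeasure (offspring_measure p) {k} = ennreal (p k)"
  unfolding offspring_measure_def
  by (subst emeasure_density) (auto simp: nn_integral_count_space_indicator ac_simps)

lemma distr_Kinv:
  assumes p: "\<forall>k. 0 \<le> p k" "p sums 1"
  shows "distr Unif (count_space UNIV) (Kinv p) = offspring_measure p"
proof (rule measure_eqI_countable[where A=UNIV])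
  fix k :: nat
  show "emeasure (distr Unif (count_space UNIV) (Kinv p)) {k} = emeasure (offspring_measure p) {k}"
    by (simp add: emeasure_distr emeasure_Unif_Kinv[OF p] emeasure_offspring_singleton)
qed (auto simp: offspring_measure_def)

lemma prob_space_offspring:
  assumes p: "\<forall>k. 0 \<le> p k" "p sums 1"
  shows "prob_space (offspring_measure p)"
proof -
  have "Kinv p \<in> measurable Unif (count_space UNIV)" by simp
  from prob_space.prob_space_distr[OF prob_space_Unif this] distr_Kinv[OF p]
  show ?thesis by simp
qed



lemma sum_fun_apply: "(\<Sum>a\<in>A. f a) x = (\<Sum>a\<in>A. f a x)"
  by (induction A rule: infinite_finite_induct) auto

definition Fset :: "('a \<Rightarrow> nat) set" where "Fset = {h. finite {x. h x \<noteq> 0}}"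

lemma countable_Fset: "countable (Fset :: ('a::countable \<Rightarrow> nat) set)"
proof -
  define G :: "('a \<times> nat) set \<Rightarrow> 'a \<Rightarrow> nat" where "G A = (\<lambda>x. \<Sum>{n. (x, n) \<in> A})" for A
  have "Fset \<subseteq> G ` {A. finite A \<and> A \<subseteq> UNIV}"
  proof
    fix h :: "'a \<Rightarrow> nat" assume h: "h \<in> Fset"
    let ?A = "(\<lambda>x. (x, h x)) ` {x. h x \<noteq> 0}"
    have "finite ?A" using h by (simp add: Fset_def)
    moreover have "G ?A = h"
    proof
      fix x
      have "{n. (x, n) \<in> ?A} = (if h x \<noteq> 0 then {h x} else {})" by auto
      then show "G ?A x = h x" by (simp add: G_def)
    qed
    ultimately show "h \<in> G ` {A. finite A \<and> A \<subseteq> UNIV}" by (intro image_eqI[where x="?A"]) auto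
  qed
  moreover have "countable (G ` {A. finite A \<and> A \<subseteq> (UNIV :: ('a \<times> nat) set)})"
    by (rule countable_image[OF countable_Collect_finite_subset]) simp
  ultimately show ?thesis by (rule countable_subset)
qed

lemma Fset_add: "a \<in> Fset \<Longrightarrow> b \<in> Fset \<Longrightarrow> a + b \<in> Fset"
  unfolding Fset_def by (auto elim!: finite_subset[rotated] simp del: finite_Un intro: finite_UnI)

lemma zero_Fset[simp]: "0 \<in> Fset"
  by (simp add: Fset_def)

lemma meas_F_add:
  assumes a: "a \<in> measurable M (count_space (Fset :: ('a::countable \<Rightarrow> nat) set))"
    and b: "b \<in> measurable M (count_space Fset)"
  shows "(\<lambda>m. a m + b m) \<in> measurable M (count_space Fset)"
proof -
  have "(\<lambda>m. (a m, b m)) \<in> measurable M (count_space Fset \<Otimes>\<^sub>M count_space Fset)"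
    using a b by (rule measurable_Pair)
  then have p: "(\<lambda>m. (a m, b m)) \<in> measurable M (count_space (Fset \<times> Fset))"
    by (simp add: pair_measure_countable countable_Fset)
  have "(\<lambda>(x, y). x + y) \<in> measurable (count_space (Fset \<times> Fset)) (count_space (Fset :: ('a \<Rightarrow> nat) set))"
    by (auto simp: measurable_count_space_eq1 Fset_add)
  from measurable_compose[OF p this] show ?thesis by simp
qed

lemma meas_F_sum:
  assumes "finite D" "\<And>d. d \<in> D \<Longrightarrow> f d \<in> measurable M (count_space (Fset :: ('a::countable \<Rightarrow> nat) set))"
  shows "(\<lambda>m. \<Sum>d\<in>D. f d m) \<in> measurable M (count_space Fset)"
  using assms
proof (induction D rule: finite_induct)
  case empty
  show ?case by (auto intro!: measurable_const simp: Fset_def)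
next
  case (insert d D)
  have eq: "(\<lambda>m. \<Sum>d\<in>insert d D. f d m) = (\<lambda>m. f d m + (\<Sum>d\<in>D. f d m))"
    by (intro ext) (simp only: sum.insert[OF insert.hyps])
  show ?case unfolding eq by (intro meas_F_add) (use insert in auto)
qed

lemma occ_Suc_Sigma:
  assumes "finite {x. occ \<omega> t x \<noteq> 0}"
  shows "occ \<omega> (Suc t) y = (\<Sum>(x, i)\<in>Sigma {x. occ \<omega> t x \<noteq> 0} (\<lambda>x. {..<occ \<omega> t x}).
            if x + fst (\<omega> (t, x, i)) = y then snd (\<omega> (t, x, i)) else 0)"
  apply (simp only: occ.simps)
  apply (rule sum.Sigma)
  using assms by auto

lemma occ_Fset: "occ \<omega> t \<in> Fset"
proof (induction t)
  case 0 then show ?case by (simp add: Fset_def)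
next
  case (Suc t)
  let ?S = "{x. occ \<omega> t x \<noteq> 0}"
  let ?T = "Sigma ?S (\<lambda>x. {..<occ \<omega> t x})"
  have finS: "finite ?S" using Suc by (auto simp: Fset_def)
  have fin: "finite ?T" using finS by auto
  have "{y. occ \<omega> (Suc t) y \<noteq> 0} \<subseteq> (\<lambda>(x, i). x + fst (\<omega> (t, x, i))) ` ?T"
  proof
    fix y assume "y \<in> {y. occ \<omega> (Suc t) y \<noteq> 0}"
    then have "occ \<omega> (Suc t) y \<noteq> 0" by blast
    then have "(\<Sum>(x, i)\<in>?T. if x + fst (\<omega> (t, x, i)) = y then snd (\<omega> (t, x, i)) else 0) \<noteq> 0"
      unfolding occ_Suc_Sigma[OF finS] .
    then obtain xi where "xi \<in> ?T" "(case xi of (x, i) \<Rightarrow> if x + fst (\<omega> (t, x, i)) = y then snd (\<omega> (t, x, i)) else 0) \<noteq> 0"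
      by (rule sum.not_neutral_contains_not_neutral)
    then show "y \<in> (\<lambda>(x, i). x + fst (\<omega> (t, x, i))) ` ?T" by (force split: if_splits prod.splits)
  qed
  then show ?case using fin by (auto simp: Fset_def elim!: finite_subset)
qed

lemma finite_occ: "finite {x. occ \<omega> t x \<noteq> 0}"
  using occ_Fset[of \<omega> t] by (simp add: Fset_def)

lemma occ_dep: "(\<And>j. fst j < t \<Longrightarrow> \<omega> j = \<omega>' j) \<Longrightarrow> occ \<omega> t = occ \<omega>' t"
proof (induction t)
  case 0 then show ?case by simp
next
  case (Suc t)
  then have IH: "occ \<omega> t = occ \<omega>' t" by auto
  have eq: "\<And>x i. \<omega> (t, x, i) = \<omega>' (t, x, i)" using Suc.prems by auto
  show ?case by (simp only: occ.simps IH eq)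
qed

lemma pop_dep: "(\<And>j. fst j < t \<Longrightarrow> \<omega> j = \<omega>' j) \<Longrightarrow> pop \<omega> t = pop \<omega>' t"
  unfolding pop_def by (simp add: occ_dep[of t \<omega> \<omega>'])

lemma pop_Suc:
  "pop \<omega> (Suc t) = (\<Sum>x\<in>{x. occ \<omega> t x \<noteq> 0}. \<Sum>i<occ \<omega> t x. snd (\<omega> (t, x, i)))"
proof -
  let ?S = "{x. occ \<omega> t x \<noteq> 0}"
  let ?T = "Sigma ?S (\<lambda>x. {..<occ \<omega> t x})"
  let ?Y = "(\<lambda>(x, i). x + fst (\<omega> (t, x, i))) ` ?T"
  have finT: "finite ?T" using finite_occ[of \<omega> t] by auto
  have finY: "finite ?Y" using finT by auto
  have occS: "occ \<omega> (Suc t) y = (\<Sum>(x, i)\<in>?T. if x + fst (\<omega> (t, x, i)) = y then snd (\<omega> (t, x, i)) else 0)" for y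
    by (rule occ_Suc_Sigma[OF finite_occ])
  have sub: "{y. occ \<omega> (Suc t) y \<noteq> 0} \<subseteq> ?Y"
  proof
    fix y assume "y \<in> {y. occ \<omega> (Suc t) y \<noteq> 0}"
    then have "occ \<omega> (Suc t) y \<noteq> 0" by blast
    then have "(\<Sum>(x, i)\<in>?T. if x + fst (\<omega> (t, x, i)) = y then snd (\<omega> (t, x, i)) else 0) \<noteq> 0"
      unfolding occS .
    then obtain xi where "xi \<in> ?T" "(case xi of (x, i) \<Rightarrow> if x + fst (\<omega> (t, x, i)) = y then snd (\<omega> (t, x, i)) else 0) \<noteq> 0"
      by (rule sum.not_neutral_contains_not_neutral)
    then show "y \<in> ?Y" by (force split: if_splits prod.splits)
  qed
  have "pop \<omega> (Suc t) = (\<Sum>y\<in>?Y. occ \<omega> (Suc t) y)"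
    unfolding pop_def by (rule sum.mono_neutral_left[OF finY sub]) auto
  also have "\<dots> = (\<Sum>y\<in>?Y. \<Sum>(x, i)\<in>?T. if x + fst (\<omega> (t, x, i)) = y then snd (\<omega> (t, x, i)) else 0)"
    by (simp only: occS)
  also have "\<dots> = (\<Sum>(x, i)\<in>?T. \<Sum>y\<in>?Y. if x + fst (\<omega> (t, x, i)) = y then snd (\<omega> (t, x, i)) else 0)"
    by (subst sum.swap) (simp add: case_prod_unfold)
  also have "\<dots> = (\<Sum>(x, i)\<in>?T. snd (\<omega> (t, x, i)))"
  proof (rule sum.cong[OF refl])
    fix xi assume xi: "xi \<in> ?T"
    obtain x i where xi': "xi = (x, i)" by (cases xi)
    have "x + fst (\<omega> (t, x, i)) \<in> ?Y" using xi xi' by force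
    then show "(case xi of (x, i) \<Rightarrow> \<Sum>y\<in>?Y. if x + fst (\<omega> (t, x, i)) = y then snd (\<omega> (t, x, i)) else 0)
        = (case xi of (x, i) \<Rightarrow> snd (\<omega> (t, x, i)))"
      using finY by (simp add: xi' sum.delta)
  qed
  also have "\<dots> = (\<Sum>x\<in>?S. \<Sum>i<occ \<omega> t x. snd (\<omega> (t, x, i)))"
    using finite_occ[of \<omega> t] by (simp add: sum.Sigma)
  finally show ?thesis .
qed

lemma pop_0[simp]: "pop \<omega> 0 = 1"
proof -
  have "{x. occ \<omega> 0 x \<noteq> 0} = {0}" by auto
  then show ?thesis by (simp add: pop_def)
qed

lemma meas_occ:
  fixes W :: "'m \<Rightarrow> (nat \<times> (int ^ 'd) \<times> nat \<Rightarrow> (int ^ 'd) \<times> nat)"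
  assumes W: "\<And>j. (\<lambda>m. W m j) \<in> measurable M (count_space UNIV)"
  shows "(\<lambda>m. occ (W m) t) \<in> measurable M (count_space Fset)"
proof (induction t)
  case 0
  have "(\<lambda>x::int^'d. if x = 0 then 1 else 0 :: nat) \<in> space (count_space Fset)" by (simp add: Fset_def)
  then show ?case by (simp add: measurable_const)
next
  case (Suc t)
  define G where "G h m = (\<lambda>y. \<Sum>x\<in>{x. h x \<noteq> 0}. \<Sum>i<h x. (if x + fst (W m (t, x, i)) = y then snd (W m (t, x, i)) else 0))"
    for h :: "int ^ 'd \<Rightarrow> nat" and m
  define e where "e x c = (\<lambda>y. if x + fst c = y then snd c else (0::nat))" for x :: "int ^ 'd" and c :: "(int ^ 'd) \<times> nat"
  have eF: "e x c \<in> Fset" for x c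
  proof -
    have "{y. e x c y \<noteq> 0} \<subseteq> {x + fst c}" by (auto simp: e_def)
    then show ?thesis by (auto simp: Fset_def intro: finite_subset)
  qed
  have G: "(\<lambda>m. G h m) \<in> measurable M (count_space Fset)" if h: "h \<in> Fset" for h
  proof -
    have eq: "G h m = (\<Sum>x\<in>{x. h x \<noteq> 0}. \<Sum>i<h x. e x (W m (t, x, i)))" for m
      by (simp add: G_def e_def fun_eq_iff sum_fun_apply)
    have "(\<lambda>m. e x (W m (t, x, i))) \<in> measurable M (count_space Fset)" for x i
    proof -
      have "e x \<in> measurable (count_space UNIV) (count_space Fset)"
        by (auto simp: measurable_count_space_eq1 eF)
      from measurable_compose[OF W this] show ?thesis .
    qed
    then show ?thesis unfolding eq
      using h by (intro meas_F_sum) (auto simp: Fset_def)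
  qed
  have "(\<lambda>m. G (occ (W m) t) m) \<in> measurable M (count_space Fset)"
    by (rule measurable_compose_countable'[OF G Suc countable_Fset])
  then show ?case by (simp add: G_def)
qed



definition Jm :: "(int ^ 'd) measure" where "Jm = measure_pmf (pmf_of_set nbr_steps)"
definition V0 :: "((int ^ 'd) \<times> real) measure" where "V0 = Jm \<Otimes>\<^sub>M Unif"
definition Uspace :: "(nat \<times> (int ^ 'd) \<times> nat \<Rightarrow> (int ^ 'd) \<times> real) measure" where
  "Uspace = PiM UNIV (\<lambda>_. V0)"
definition Phi :: "(nat \<times> (int ^ 'd) \<Rightarrow> nat \<Rightarrow> real) \<Rightarrow> (nat \<times> (int ^ 'd) \<times> nat \<Rightarrow> (int ^ 'd) \<times> real)
    \<Rightarrow> (nat \<times> (int ^ 'd) \<times> nat \<Rightarrow> (int ^ 'd) \<times> nat)" where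
  "Phi q u = (\<lambda>j. (fst (u j), Kinv (q (fst j, fst (snd j))) (snd (u j))))"
definition popF :: "(int ^ 'd \<Rightarrow> nat) \<Rightarrow> nat" where
  "popF h = (\<Sum>x\<in>{x. h x \<noteq> 0}. h x)"

lemma pop_popF: "pop \<omega> t = popF (occ \<omega> t)"
  by (simp add: pop_def popF_def)

lemma nbr_steps_finite: "finite (nbr_steps :: (int ^ 'd) set)"
  unfolding nbr_steps_def by simp

lemma nbr_steps_ne: "(nbr_steps :: (int ^ 'd) set) \<noteq> {}"
  unfolding nbr_steps_def by simp

lemma sets_Jm[simp, measurable_cong]: "sets Jm = sets (count_space UNIV)"
  by (simp add: Jm_def)

lemma space_Jm[simp]: "space Jm = UNIV"
  by (simp add: Jm_def)

lemma prob_Jm: "prob_space Jm"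
  by (simp add: Jm_def prob_space_measure_pmf)

lemma prob_V0: "prob_space V0"
  unfolding V0_def
  by (intro prob_space_pair prob_Jm prob_space_Unif)

lemma sets_V0[measurable_cong]: "sets V0 = sets (count_space UNIV \<Otimes>\<^sub>M borel)"
  unfolding V0_def by (rule sets_pair_measure_cong) simp_all

lemma space_V0[simp]: "space V0 = UNIV"
  by (simp add: V0_def space_pair_measure)

lemma prob_Uspace: "prob_space Uspace"
  unfolding Uspace_def by (intro prob_space_PiM prob_V0)

lemma coord_any:
  assumes "undefined \<in> space (M i)"
  shows "(\<lambda>x. x i) \<in> measurable (PiM I M) (M i)"
proof (cases "i \<in> I")
  case True then show ?thesis by simp
next
  case False
  have "(\<lambda>x. x i) \<in> measurable (PiM I M) (M i) \<longleftrightarrow> (\<lambda>x. undefined) \<in> measurable (PiM I M) (M i)"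
    by (rule measurable_cong) (use False in \<open>auto simp: space_PiM PiE_def extensional_def\<close>)
  then show ?thesis using assms by (simp add: measurable_const)
qed

lemma meas_count_pair:
  fixes f :: "'m \<Rightarrow> 'a::countable" and g :: "'m \<Rightarrow> 'b::countable"
  assumes "f \<in> measurable M (count_space UNIV)" "g \<in> measurable M (count_space UNIV)"
  shows "(\<lambda>m. (f m, g m)) \<in> measurable M (count_space UNIV)"
proof -
  have "(\<lambda>m. (f m, g m)) \<in> measurable M (count_space UNIV \<Otimes>\<^sub>M count_space UNIV)"
    using assms by (rule measurable_Pair)
  then show ?thesis by (simp add: pair_measure_countable)
qed

lemma meas_via_occ:
  fixes W :: "'m \<Rightarrow> (nat \<times> (int ^ 'd) \<times> nat \<Rightarrow> (int ^ 'd) \<times> nat)"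
  assumes W: "\<And>j. (\<lambda>m. W m j) \<in> measurable M (count_space UNIV)"
    and F: "\<And>h. F h \<in> space N"
  shows "(\<lambda>m. F (occ (W m) t)) \<in> measurable M N"
proof -
  have "F \<in> measurable (count_space Fset) N" by (simp add: measurable_count_space_eq1 F)
  from measurable_compose[OF meas_occ[OF W] this] show ?thesis .
qed

lemma sets_offspring[simp, measurable_cong]: "sets (offspring_measure p) = sets (count_space UNIV)"
  by (simp add: offspring_measure_def)

lemma sets_Mq: "sets ((Jm :: (int ^ 'd) measure) \<Otimes>\<^sub>M offspring_measure p) = sets (count_space UNIV)"
proof -
  have "sets ((Jm :: (int ^ 'd) measure) \<Otimes>\<^sub>M offspring_measure p) = sets (count_space (UNIV :: (int ^ 'd) set) \<Otimes>\<^sub>M (count_space UNIV :: nat measure))"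
    by (rule sets_pair_measure_cong) simp_all
  moreover have "count_space (UNIV :: (int ^ 'd) set) \<Otimes>\<^sub>M (count_space UNIV :: nat measure) = count_space UNIV"
    by (subst pair_measure_countable) auto
  ultimately show ?thesis by metis
qed



locale brw =
  fixes \<mu> :: "(nat \<Rightarrow> real) measure"
  assumes prob_mu: "prob_space \<mu>"
    and sets_mu: "sets \<mu> = sets (PiM UNIV (\<lambda>_::nat. (borel :: real measure)))"
    and AE_mu: "AE p in \<mu>. (\<forall>k. 0 \<le> p k) \<and> p sums 1"
begin

lemma space_mu[simp]: "space \<mu> = UNIV"
  using sets_eq_imp_space_eq[OF sets_mu] by (simp add: space_PiM)

lemma meas_mu_comp[measurable]: "(\<lambda>p. p k) \<in> borel_measurable \<mu>"
  by (subst measurable_cong_sets[OF sets_mu refl]) simp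

lemma meas_Kinv_gen:
  assumes A: "A \<in> measurable M \<mu>" and B: "B \<in> borel_measurable M"
  shows "(\<lambda>m. Kinv (A m) (B m)) \<in> measurable M (count_space UNIV)"
proof -
  have 1: "(\<lambda>m. (A m, B m)) \<in> measurable M (\<mu> \<Otimes>\<^sub>M borel)" by (rule measurable_Pair[OF A B])
  have "sets (\<mu> \<Otimes>\<^sub>M borel) = sets (PiM UNIV (\<lambda>_::nat. (borel :: real measure)) \<Otimes>\<^sub>M (borel :: real measure))"
    by (rule sets_pair_measure_cong[OF sets_mu refl])
  then have 2: "(\<lambda>(p, v). Kinv p v) \<in> measurable (\<mu> \<Otimes>\<^sub>M borel) (count_space UNIV)"
    using measurable_Kinv_pair measurable_cong_sets by blast
  from measurable_compose[OF 1 2] show ?thesis by simp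
qed

lemma meas_Phi_coord:
  assumes A: "\<And>i. (\<lambda>m. A m i) \<in> measurable M \<mu>" and B: "\<And>j. (\<lambda>m. B m j) \<in> measurable M V0"
  shows "(\<lambda>m. Phi (A m) (B m) j) \<in> measurable M (count_space UNIV)"
proof -
  have f: "fst \<in> measurable V0 (count_space UNIV)"
    unfolding V0_def using measurable_fst[of Jm Unif] measurable_cong_sets[OF refl sets_Jm] by blast
  have s: "snd \<in> measurable V0 borel"
    unfolding V0_def using measurable_snd[of Jm Unif] measurable_cong_sets[OF refl sets_Unif] by blast
  have "(\<lambda>m. fst (B m j)) \<in> measurable M (count_space UNIV)"
    using measurable_compose[OF B f] .
  moreover have "(\<lambda>m. Kinv (A m (fst j, fst (snd j))) (snd (B m j))) \<in> measurable M (count_space UNIV)"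
    using meas_Kinv_gen[OF A measurable_compose[OF B s]] .
  ultimately show ?thesis unfolding Phi_def by (rule meas_count_pair)
qed

lemma coord_mu: "(\<lambda>x. x i) \<in> measurable (PiM I (\<lambda>_. \<mu>)) \<mu>"
  by (rule coord_any) simp

lemma coord_V0: "(\<lambda>x. x i) \<in> measurable (PiM I (\<lambda>_. V0)) V0"
  by (rule coord_any) simp

definition Qm :: "(nat \<times> (int ^ 'd) \<Rightarrow> nat \<Rightarrow> real) measure" where
  "Qm = PiM UNIV (\<lambda>_. \<mu>)"

lemma prob_Qm: "prob_space Qm"
  unfolding Qm_def by (intro prob_space_PiM prob_mu)

definition isdist :: "(nat \<Rightarrow> real) \<Rightarrow> bool" where
  "isdist p \<longleftrightarrow> (\<forall>k. 0 \<le> p k) \<and> p sums 1"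

lemma AE_Qm: "AE q in Qm. \<forall>i. isdist (q i)"
proof -
  have "\<And>i. AE q in Qm. isdist (q i)"
    unfolding Qm_def isdist_def
    by (rule AE_PiM_component[OF prob_mu]) (use AE_mu in auto)
  then show ?thesis using AE_all_countable[of "\<lambda>i q. isdist (q i)" Qm] by blast
qed

lemma quenched_repr:
  fixes q :: "nat \<times> (int ^ 'd) \<Rightarrow> nat \<Rightarrow> real"
  assumes q: "\<And>i. isdist (q i)"
  shows "quenched_law q = distr Uspace (PiM UNIV (\<lambda>j. (Jm :: (int ^ 'd) measure) \<Otimes>\<^sub>M offspring_measure (q (fst j, fst (snd j))))) (Phi q)"
proof -
  define Mq where "Mq j = (Jm :: (int ^ 'd) measure) \<Otimes>\<^sub>M offspring_measure (q (fst j, fst (snd j)))" for j :: "nat \<times> (int ^ 'd) \<times> nat"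
  define g where "g j w = (fst w, Kinv (q (fst j, fst (snd j))) (snd w))" for j :: "nat \<times> (int ^ 'd) \<times> nat" and w :: "(int ^ 'd) \<times> real"
  interpret U: prob_space Uspace by (rule prob_Uspace)
  have gm: "g j \<in> measurable (V0 :: ((int ^ 'd) \<times> real) measure) (Mq j)" for j
  proof -
    have "g j \<in> measurable V0 (count_space UNIV)"
      unfolding g_def
      using meas_Phi_coord[where A="\<lambda>w. q" and B="\<lambda>w _. w" and M=V0 and j=j]
      by (simp add: Phi_def measurable_const)
    then show ?thesis unfolding Mq_def by (subst measurable_cong_sets[OF refl sets_Mq])
  qed
  have ind: "U.indep_vars Mq (\<lambda>j u. g j (u j)) UNIV"
  proof -
    have ci: "U.indep_vars (\<lambda>_. V0) (\<lambda>i \<omega>. \<omega> i) UNIV"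
      using PiM_coord_indep[of UNIV "\<lambda>_. V0"] prob_V0 by (simp add: Uspace_def)
    show ?thesis by (rule U.indep_vars_compose2[OF ci]) (auto simp: gm)
  qed
  have rv: "\<And>j. (\<lambda>u. g j (u j)) \<in> measurable Uspace (Mq j)"
    unfolding Uspace_def by (rule measurable_compose[OF coord_V0 gm])
  have eq1: "distr Uspace (PiM UNIV Mq) (\<lambda>u. \<lambda>j\<in>UNIV. g j (u j)) = PiM UNIV (\<lambda>j. distr Uspace (Mq j) (\<lambda>u. g j (u j)))"
    using ind U.indep_vars_iff_distr_eq_PiM[where I=UNIV and M'=Mq and X="\<lambda>j u. g j (u j)"] rv by simp
  have eq2: "distr Uspace (Mq j) (\<lambda>u. g j (u j)) = Mq j" for j
  proof -
    have "distr Uspace (Mq j) (\<lambda>u. g j (u j)) = distr (distr Uspace V0 (\<lambda>u. u j)) (Mq j) (g j)"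
      by (subst distr_distr) (auto simp: Uspace_def gm comp_def)
    also have "distr Uspace V0 (\<lambda>u. u j) = V0"
      unfolding Uspace_def by (rule distr_PiM_component) (auto simp: prob_V0)
    also have "distr V0 (Mq j) (g j) = distr (Jm \<Otimes>\<^sub>M Unif) (Jm \<Otimes>\<^sub>M count_space UNIV) (\<lambda>(x, y). (id x, Kinv (q (fst j, fst (snd j))) y))"
      by (rule distr_cong) (auto simp: V0_def Mq_def g_def sets_pair_measure_cong)
    also have "\<dots> = distr Jm Jm id \<Otimes>\<^sub>M distr Unif (count_space UNIV) (Kinv (q (fst j, fst (snd j))))"
    proof (rule pair_measure_distr[symmetric])
      show "id \<in> measurable Jm Jm" by simp
      show km: "Kinv (q (fst j, fst (snd j))) \<in> measurable Unif (count_space UNIV)"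
        by (subst measurable_cong_sets[OF sets_Unif refl]) (rule measurable_Kinv)
      show "sigma_finite_measure (distr Unif (count_space UNIV) (Kinv (q (fst j, fst (snd j)))))"
        using prob_space.prob_space_distr[OF prob_space_Unif km]
        by (simp add: prob_space_imp_sigma_finite)
    qed
    also have "\<dots> = Mq j"
      using q[of "(fst j, fst (snd j))"] by (simp add: Mq_def distr_Kinv isdist_def id_def)
    finally show ?thesis .
  qed
  have "quenched_law q = PiM UNIV Mq"
    unfolding quenched_law_def Mq_def by (rule PiM_cong) (auto split: prod.splits simp: Jm_def)
  also have "\<dots> = distr Uspace (PiM UNIV Mq) (\<lambda>u. \<lambda>j\<in>UNIV. g j (u j))"
    by (simp add: eq1 eq2)
  also have "\<dots> = distr Uspace (PiM UNIV Mq) (Phi q)"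
    by (rule distr_cong) (auto simp: Phi_def g_def)
  finally show ?thesis by (simp only: Mq_def[abs_def])
qed

end



lemma tangent_pow:
  fixes x m :: real
  assumes "0 \<le> x" "0 \<le> m"
  shows "m ^ n + real n * m ^ (n - 1) * (x - m) \<le> x ^ n"
proof (cases n)
  case 0 then show ?thesis by simp
next
  case (Suc k)
  have eq: "x ^ Suc k - m ^ Suc k = (x - m) * (\<Sum>i<Suc k. x ^ i * m ^ (k - i))"
    by (rule diff_power_eq_sum)
  show ?thesis
  proof (cases "m \<le> x")
    case True
    have "(\<Sum>i<Suc k. m ^ k) \<le> (\<Sum>i<Suc k. x ^ i * m ^ (k - i))"
    proof (rule sum_mono)
      fix i assume "i \<in> {..<Suc k}"
      then have "m ^ k = m ^ i * m ^ (k - i)" by (simp add: power_add[symmetric])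
      also have "\<dots> \<le> x ^ i * m ^ (k - i)"
        using True assms by (intro mult_right_mono power_mono) auto
      finally show "m ^ k \<le> x ^ i * m ^ (k - i)" .
    qed
    then have "(x - m) * (real (Suc k) * m ^ k) \<le> (x - m) * (\<Sum>i<Suc k. x ^ i * m ^ (k - i))"
      using True by (intro mult_left_mono) auto
    then show ?thesis using eq Suc by (simp add: algebra_simps)
  next
    case False
    have "(\<Sum>i<Suc k. x ^ i * m ^ (k - i)) \<le> (\<Sum>i<Suc k. m ^ k)"
    proof (rule sum_mono)
      fix i assume "i \<in> {..<Suc k}"
      then have "m ^ k = m ^ i * m ^ (k - i)" by (simp add: power_add[symmetric])
      moreover have "x ^ i * m ^ (k - i) \<le> m ^ i * m ^ (k - i)"
        using False assms by (intro mult_right_mono power_mono) auto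
      ultimately show "x ^ i * m ^ (k - i) \<le> m ^ k" by simp
    qed
    then have "(x - m) * (real (Suc k) * m ^ k) \<le> (x - m) * (\<Sum>i<Suc k. x ^ i * m ^ (k - i))"
      using False by (intro mult_left_mono_neg) auto
    then show ?thesis using eq Suc by (simp add: algebra_simps)
  qed
qed

lemma ennreal_jensen_pow:
  assumes M: "prob_space M" and f: "f \<in> borel_measurable M" and le: "\<And>x. x \<in> space M \<Longrightarrow> f x \<le> 1"
  shows "(\<integral>\<^sup>+x. f x \<partial>M) ^ n \<le> (\<integral>\<^sup>+x. f x ^ n \<partial>M)"
proof -
  interpret prob_space M by fact
  define X where "X x = enn2real (f x)" for x
  have fX: "f x = ennreal (X x)" if "x \<in> space M" for x
  proof -
    have "f x \<noteq> \<top>" using le[OF that] by (auto simp: top_unique)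
    then show ?thesis by (simp add: X_def ennreal_enn2real_if)
  qed
  have X01: "0 \<le> X x" "X x \<le> 1" if "x \<in> space M" for x
    using le[OF that] by (auto simp: X_def enn2real_leI)
  have Xm[measurable]: "X \<in> borel_measurable M" unfolding X_def using f by measurable
  have intX: "integrable M X"
    by (rule integrable_const_bound[where B=1]) (use X01 in auto)
  have intXn: "integrable M (\<lambda>x. X x ^ n)"
    by (rule integrable_const_bound[where B=1]) (use X01 in \<open>auto intro: power_le_one\<close>)
  define m where "m = expectation X"
  have m0: "0 \<le> m" unfolding m_def using X01 by (intro integral_nonneg_AE) auto
  have "(\<integral>\<^sup>+x. f x \<partial>M) = (\<integral>\<^sup>+x. ennreal (X x) \<partial>M)"
    by (rule nn_integral_cong) (simp add: fX)
  also have "\<dots> = ennreal m" unfolding m_def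
    by (rule nn_integral_eq_integral[OF intX]) (use X01 in auto)
  finally have 1: "(\<integral>\<^sup>+x. f x \<partial>M) = ennreal m" .
  have "(\<integral>\<^sup>+x. f x ^ n \<partial>M) = (\<integral>\<^sup>+x. ennreal (X x ^ n) \<partial>M)"
    by (rule nn_integral_cong) (use X01 in \<open>simp add: fX ennreal_power\<close>)
  also have "\<dots> = ennreal (expectation (\<lambda>x. X x ^ n))"
    by (rule nn_integral_eq_integral[OF intXn]) (use X01 in auto)
  finally have 2: "(\<integral>\<^sup>+x. f x ^ n \<partial>M) = ennreal (expectation (\<lambda>x. X x ^ n))" .
  have "m ^ n = expectation (\<lambda>x. m ^ n + real n * m ^ (n - 1) * (X x - m))"
    using intX by (simp add: m_def prob_space)
  also have "\<dots> \<le> expectation (\<lambda>x. X x ^ n)"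
    by (rule integral_mono) (use intX intXn X01 m0 tangent_pow in auto)
  finally have "m ^ n \<le> expectation (\<lambda>x. X x ^ n)" .
  then show ?thesis unfolding 1 2 using m0 by (simp add: ennreal_power ennreal_leI)
qed



definition phi :: "real \<Rightarrow> (nat \<Rightarrow> real) \<Rightarrow> ennreal" where
  "phi s p = (\<integral>\<^sup>+v. ennreal s ^ Kinv p v \<partial>Unif)"

lemma V0_snd:
  assumes g: "g \<in> borel_measurable borel"
  shows "(\<integral>\<^sup>+w. g (snd w) \<partial>(V0 :: ((int ^ 'd) \<times> real) measure)) = (\<integral>\<^sup>+v. g v \<partial>Unif)"
proof -
  interpret J: prob_space "Jm :: (int ^ 'd) measure" by (rule prob_Jm)
  interpret Un: prob_space Unif by (rule prob_space_Unif)
  interpret pair_sigma_finite "Jm :: (int ^ 'd) measure" Unif ..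
  have gm: "(\<lambda>w. g (snd w)) \<in> borel_measurable ((Jm :: (int ^ 'd) measure) \<Otimes>\<^sub>M Unif)"
    using g by measurable
  have "(\<integral>\<^sup>+w. g (snd w) \<partial>(V0 :: ((int ^ 'd) \<times> real) measure)) = (\<integral>\<^sup>+a. \<integral>\<^sup>+v. g v \<partial>Unif \<partial>(Jm :: (int ^ 'd) measure))"
    unfolding V0_def using Un.nn_integral_fst[OF gm] by (simp only: snd_conv)
  also have "\<dots> = (\<integral>\<^sup>+v. g v \<partial>Unif)" using J.emeasure_space_1 by simp
  finally show ?thesis .
qed

lemma phi_le_1:
  assumes "0 \<le> s" "s \<le> 1" shows "phi s p \<le> 1"
proof -
  interpret Un: prob_space Unif by (rule prob_space_Unif)
  have e1: "ennreal s \<le> 1" using assms by simp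
  have e2: "ennreal s ^ n \<le> 1" for n by (rule power_le_one) (use e1 in auto)
  have "phi s p \<le> (\<integral>\<^sup>+v. 1 \<partial>Unif)"
    unfolding phi_def by (rule nn_integral_mono) (rule e2)
  then show ?thesis using Un.emeasure_space_1 by simp
qed

lemma phi_dist:
  assumes p: "\<forall>k. 0 \<le> p k" "p sums 1" and s: "0 \<le> s"
  shows "phi s p = (\<Sum>k. ennreal (p k * s ^ k))"
proof -
  have "phi s p = (\<integral>\<^sup>+k. ennreal s ^ k \<partial>distr Unif (count_space UNIV) (Kinv p))"
    unfolding phi_def by (subst nn_integral_distr) auto
  also have "\<dots> = (\<integral>\<^sup>+k. ennreal s ^ k \<partial>offspring_measure p)"
    by (simp add: distr_Kinv[OF p])
  also have "\<dots> = (\<integral>\<^sup>+k. ennreal (p k) * ennreal s ^ k \<partial>count_space UNIV)"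
    unfolding offspring_measure_def by (subst nn_integral_density) auto
  also have "\<dots> = (\<Sum>k. ennreal (p k * s ^ k))"
    using p s by (simp add: nn_integral_count_space_nat ennreal_power ennreal_mult)
  finally show ?thesis .
qed

context brw
begin

lemma meas_phi: "(\<lambda>p. phi s p) \<in> borel_measurable \<mu>"
proof -
  interpret Un: prob_space Unif by (rule prob_space_Unif)
  have k: "(\<lambda>x. Kinv (fst x) (snd x)) \<in> measurable (\<mu> \<Otimes>\<^sub>M Unif) (count_space UNIV)"
    by (rule meas_Kinv_gen) auto
  have pw: "(\<lambda>n::nat. ennreal s ^ n) \<in> measurable (count_space UNIV) borel" by simp
  have "(\<lambda>x. ennreal s ^ Kinv (fst x) (snd x)) \<in> borel_measurable (\<mu> \<Otimes>\<^sub>M Unif)"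
    using measurable_compose[OF k pw] .
  then have "case_prod (\<lambda>p v. ennreal s ^ Kinv p v) \<in> borel_measurable (\<mu> \<Otimes>\<^sub>M Unif)"
    by (simp add: case_prod_beta')
  then show ?thesis unfolding phi_def by (rule Un.borel_measurable_nn_integral)
qed

lemma AE_mu_bound: "AE p in \<mu>. 0 \<le> p k \<and> p k \<le> 1"
  using AE_mu
proof eventually_elim
  case (elim p)
  then have "p k = cum p (Suc k) - cum p k" "cum p (Suc k) \<le> 1" "0 \<le> cum p k"
    using cum_le_1[of p "Suc k"] cum_mono[of p 0 k] by (auto simp: cum_Suc cum_def)
  then show ?case using elim by (auto simp: cum_Suc)
qed

lemma mean_offspring_eq:
  "mean_offspring (Qm :: (nat \<times> (int ^ 'd) \<Rightarrow> nat \<Rightarrow> real) measure) k = (\<integral>p. p k \<partial>\<mu>)"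
proof -
  have "(\<integral>p. p k \<partial>\<mu>) = (\<integral>p. p k \<partial>distr (Qm :: (nat \<times> (int ^ 'd) \<Rightarrow> nat \<Rightarrow> real) measure) \<mu> (\<lambda>q. q (0, 0)))"
    unfolding Qm_def by (subst distr_PiM_component) (auto simp: prob_mu)
  also have "\<dots> = (\<integral>q. q (0, 0) k \<partial>(Qm :: (nat \<times> (int ^ 'd) \<Rightarrow> nat \<Rightarrow> real) measure))"
    by (rule integral_distr) (auto simp: Qm_def meas_mu_comp)
  finally show ?thesis by (simp add: mean_offspring_def)
qed

lemma int_phi:
  assumes s: "0 \<le> s" "s \<le> 1"
  shows "(\<integral>\<^sup>+p. phi s p \<partial>\<mu>) = ennreal (pgf (mean_offspring (Qm :: (nat \<times> (int ^ 'd) \<Rightarrow> nat \<Rightarrow> real) measure)) s)"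
    and "0 \<le> pgf (mean_offspring (Qm :: (nat \<times> (int ^ 'd) \<Rightarrow> nat \<Rightarrow> real) measure)) s"
    and "pgf (mean_offspring (Qm :: (nat \<times> (int ^ 'd) \<Rightarrow> nat \<Rightarrow> real) measure)) s \<le> 1"
proof -
  interpret P: prob_space \<mu> by (rule prob_mu)
  define mo where "mo k = (\<integral>p. p k \<partial>\<mu>)" for k
  have mo_eq: "mean_offspring (Qm :: (nat \<times> (int ^ 'd) \<Rightarrow> nat \<Rightarrow> real) measure) = mo"
    by (simp add: fun_eq_iff mo_def mean_offspring_eq)
  have mo0: "0 \<le> mo k" for k
    unfolding mo_def by (rule integral_nonneg_AE) (use AE_mu_bound in \<open>auto elim: AE_mp\<close>)
  have int: "(\<integral>\<^sup>+p. ennreal (p k * s ^ k) \<partial>\<mu>) = ennreal (mo k * s ^ k)" for k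
  proof -
    have ik: "integrable \<mu> (\<lambda>p. p k * s ^ k)"
    proof (rule P.integrable_const_bound[where B=1])
      show "AE p in \<mu>. norm (p k * s ^ k) \<le> 1"
        using AE_mu_bound[of k]
      proof eventually_elim
        case (elim p)
        have "s ^ k \<le> 1" using s by (simp add: power_le_one)
        then show ?case using elim s by (auto simp: abs_mult intro: mult_le_one)
      qed
    qed (rule borel_measurable_times[OF meas_mu_comp], simp)
    have "(\<integral>\<^sup>+p. ennreal (p k * s ^ k) \<partial>\<mu>) = ennreal (\<integral>p. p k * s ^ k \<partial>\<mu>)"
      by (rule nn_integral_eq_integral[OF ik]) (use AE_mu_bound[of k] s in \<open>auto elim!: AE_mp\<close>)
    then show ?thesis by (simp add: mo_def)
  qed
  have "AE p in \<mu>. phi s p = (\<Sum>k. ennreal (p k * s ^ k))"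
    using AE_mu
  proof eventually_elim
    case (elim p) then show ?case using phi_dist[of p s] s by blast
  qed
  then have "(\<integral>\<^sup>+p. phi s p \<partial>\<mu>) = (\<integral>\<^sup>+p. (\<Sum>k. ennreal (p k * s ^ k)) \<partial>\<mu>)"
    by (rule nn_integral_cong_AE)
  also have "\<dots> = (\<Sum>k. \<integral>\<^sup>+p. ennreal (p k * s ^ k) \<partial>\<mu>)"
    by (rule nn_integral_suminf) measurable
  also have "\<dots> = (\<Sum>k. ennreal (mo k * s ^ k))" by (simp add: int)
  finally have eq: "(\<integral>\<^sup>+p. phi s p \<partial>\<mu>) = (\<Sum>k. ennreal (mo k * s ^ k))" .
  have le1: "(\<integral>\<^sup>+p. phi s p \<partial>\<mu>) \<le> 1"
  proof -
    have "(\<integral>\<^sup>+p. phi s p \<partial>\<mu>) \<le> (\<integral>\<^sup>+p. 1 \<partial>\<mu>)"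
      by (rule nn_integral_mono) (rule phi_le_1[OF s])
    then show ?thesis using P.emeasure_space_1 by simp
  qed
  have nn: "0 \<le> mo k * s ^ k" for k using mo0 s by simp
  have summ: "summable (\<lambda>k. mo k * s ^ k)"
    by (rule summable_suminf_not_top[OF nn]) (use eq le1 in \<open>auto simp: top_unique\<close>)
  have eq2: "(\<Sum>k. ennreal (mo k * s ^ k)) = ennreal (\<Sum>k. mo k * s ^ k)"
    by (rule suminf_ennreal2[OF nn summ])
  have pgf_eq: "pgf mo s = (\<Sum>k. mo k * s ^ k)" by (simp add: pgf_def mult.commute)
  show 1: "(\<integral>\<^sup>+p. phi s p \<partial>\<mu>) = ennreal (pgf (mean_offspring (Qm :: (nat \<times> (int ^ 'd) \<Rightarrow> nat \<Rightarrow> real) measure)) s)"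
    by (simp add: mo_eq pgf_eq eq eq2)
  show 2: "0 \<le> pgf (mean_offspring (Qm :: (nat \<times> (int ^ 'd) \<Rightarrow> nat \<Rightarrow> real) measure)) s"
    unfolding mo_eq pgf_eq by (rule suminf_nonneg[OF summ nn])
  show "pgf (mean_offspring (Qm :: (nat \<times> (int ^ 'd) \<Rightarrow> nat \<Rightarrow> real) measure)) s \<le> 1"
    using le1 2 unfolding 1 by simp
qed

end



definition NN :: "nat \<Rightarrow> (nat \<times> (int ^ 'd) \<Rightarrow> nat \<Rightarrow> real) \<Rightarrow> (nat \<times> (int ^ 'd) \<times> nat \<Rightarrow> (int ^ 'd) \<times> real) \<Rightarrow> (int ^ 'd \<Rightarrow> nat)" where
  "NN t aq au = occ (Phi aq au) t"

definition HH :: "real \<Rightarrow> nat \<Rightarrow> (nat \<times> (int ^ 'd) \<Rightarrow> nat \<Rightarrow> real) \<Rightarrow> (nat \<times> (int ^ 'd) \<Rightarrow> nat \<Rightarrow> real)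
   \<Rightarrow> (nat \<times> (int ^ 'd) \<times> nat \<Rightarrow> (int ^ 'd) \<times> real) \<Rightarrow> (nat \<times> (int ^ 'd) \<times> nat \<Rightarrow> (int ^ 'd) \<times> real) \<Rightarrow> ennreal" where
  "HH s t aq bq au bu = (\<Prod>x\<in>{x. NN t aq au x \<noteq> 0}. \<Prod>i<NN t aq au x. ennreal s ^ Kinv (bq (t, x)) (snd (bu (t, x, i))))"

lemma HH_eq:
  assumes s: "0 \<le> s"
  shows "ennreal s ^ pop (Phi q u) (Suc t) =
    HH s t (restrict q {j. fst j < t}) (restrict q (UNIV - {j. fst j < t})) (restrict u {j. fst j < t}) (restrict u (UNIV - {j. fst j < t}))"
proof -
  have occeq: "occ (Phi q u) t = NN t (restrict q {j. fst j < t}) (restrict u {j. fst j < t})"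
    unfolding NN_def by (rule occ_dep) (auto simp: Phi_def)
  show ?thesis
    unfolding pop_Suc HH_def power_sum occeq[symmetric]
    by (simp add: Phi_def)
qed

lemma pop_restrict:
  "pop (Phi q u) t = popF (NN t (restrict q {j. fst j < t}) (restrict u {j. fst j < t}))"
  unfolding pop_popF NN_def by (rule arg_cong[where f=popF], rule occ_dep) (auto simp: Phi_def)

context brw
begin

lemma meas_NN:
  fixes Aq :: "'m \<Rightarrow> nat \<times> (int ^ 'd) \<Rightarrow> nat \<Rightarrow> real"
    and Au :: "'m \<Rightarrow> nat \<times> (int ^ 'd) \<times> nat \<Rightarrow> (int ^ 'd) \<times> real"
  assumes A: "\<And>i. (\<lambda>m. Aq m i) \<in> measurable M \<mu>" and B: "\<And>j. (\<lambda>m. Au m j) \<in> measurable M V0"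
  shows "(\<lambda>m. NN t (Aq m) (Au m)) \<in> measurable M (count_space Fset)"
  unfolding NN_def by (rule meas_occ) (rule meas_Phi_coord[OF A B])

lemma meas_popF_NN:
  fixes Aq :: "'m \<Rightarrow> nat \<times> (int ^ 'd) \<Rightarrow> nat \<Rightarrow> real"
    and Au :: "'m \<Rightarrow> nat \<times> (int ^ 'd) \<times> nat \<Rightarrow> (int ^ 'd) \<times> real"
  assumes A: "\<And>i. (\<lambda>m. Aq m i) \<in> measurable M \<mu>" and B: "\<And>j. (\<lambda>m. Au m j) \<in> measurable M V0"
  shows "(\<lambda>m. ennreal c ^ popF (NN t (Aq m) (Au m))) \<in> borel_measurable M"
proof -
  have "(\<lambda>h. ennreal c ^ popF h) \<in> measurable (count_space Fset) borel"
    by (simp add: measurable_count_space_eq1)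
  from measurable_compose[OF meas_NN[OF A B] this] show ?thesis .
qed

lemma meas_HH:
  fixes Aq Bq :: "'m \<Rightarrow> nat \<times> (int ^ 'd) \<Rightarrow> nat \<Rightarrow> real"
    and Au Bu :: "'m \<Rightarrow> nat \<times> (int ^ 'd) \<times> nat \<Rightarrow> (int ^ 'd) \<times> real"
  assumes A: "\<And>i. (\<lambda>m. Aq m i) \<in> measurable M \<mu>" and B: "\<And>i. (\<lambda>m. Bq m i) \<in> measurable M \<mu>"
    and C: "\<And>j. (\<lambda>m. Au m j) \<in> measurable M V0" and D: "\<And>j. (\<lambda>m. Bu m j) \<in> measurable M V0"
  shows "(\<lambda>m. HH s t (Aq m) (Bq m) (Au m) (Bu m)) \<in> borel_measurable M"
proof -
  have sn: "snd \<in> measurable V0 borel"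
    unfolding V0_def using measurable_snd[of Jm Unif] measurable_cong_sets[OF refl sets_Unif] by blast
  have pw: "(\<lambda>n::nat. ennreal s ^ n) \<in> measurable (count_space UNIV) borel" by simp
  have fac: "(\<lambda>m. ennreal s ^ Kinv (Bq m (t, x)) (snd (Bu m (t, x, i)))) \<in> borel_measurable M" for x i
    using measurable_compose[OF meas_Kinv_gen[OF B measurable_compose[OF D sn]] pw] .
  have f: "(\<lambda>m. \<Prod>x\<in>{x. h x \<noteq> 0}. \<Prod>i<h x. ennreal s ^ Kinv (Bq m (t, x)) (snd (Bu m (t, x, i)))) \<in> borel_measurable M"
    if "h \<in> Fset" for h :: "int ^ 'd \<Rightarrow> nat"
    by (intro borel_measurable_prod_ennreal fac)
  have "(\<lambda>m. (\<lambda>h m. \<Prod>x\<in>{x. h x \<noteq> 0}. \<Prod>i<h x. ennreal s ^ Kinv (Bq m (t, x)) (snd (Bu m (t, x, i)))) (NN t (Aq m) (Au m)) m) \<in> borel_measurable M"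
    by (rule measurable_compose_countable'[OF f meas_NN[OF A C] countable_Fset])
  then show ?thesis by (simp add: HH_def)
qed

lemma const_mu: "(\<lambda>m. c i) \<in> measurable M \<mu>"
  by simp

lemma const_V0: "(\<lambda>m. c i) \<in> measurable M V0"
  by simp

end



context brw
begin

lemma annealed_repr:
  assumes s: "0 \<le> s"
  shows "annealed_gf (Qm :: (nat \<times> (int ^ 'd) \<Rightarrow> nat \<Rightarrow> real) measure) t s
       = (\<integral>\<^sup>+q. \<integral>\<^sup>+u. ennreal s ^ pop (Phi q u) t \<partial>Uspace \<partial>(Qm :: (nat \<times> (int ^ 'd) \<Rightarrow> nat \<Rightarrow> real) measure))"
proof -
  have "AE q in (Qm :: (nat \<times> (int ^ 'd) \<Rightarrow> nat \<Rightarrow> real) measure).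
      (\<integral>\<^sup>+\<omega>. ennreal (s ^ pop \<omega> t) \<partial>quenched_law q) = (\<integral>\<^sup>+u. ennreal s ^ pop (Phi q u) t \<partial>Uspace)"
    using AE_Qm
  proof eventually_elim
    case (elim q)
    define Mq where "Mq j = (Jm :: (int ^ 'd) measure) \<Otimes>\<^sub>M offspring_measure (q (fst j, fst (snd j)))"
      for j :: "nat \<times> (int ^ 'd) \<times> nat"
    have c: "(\<lambda>u. Phi q u j) \<in> measurable Uspace (Mq j)" for j
    proof -
      have "(\<lambda>u. Phi q u j) \<in> measurable Uspace (count_space UNIV)"
        using meas_Phi_coord[where A="\<lambda>_. q" and B="\<lambda>u. u" and M=Uspace and j=j] coord_V0
        by (simp add: Uspace_def)
      then show ?thesis unfolding Mq_def by (subst measurable_cong_sets[OF refl sets_Mq])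
    qed
    have "(\<lambda>u j. Phi q u j) \<in> measurable Uspace (PiM UNIV Mq)"
    proof (rule measurable_PiM_single')
      fix j show "(\<lambda>u. Phi q u j) \<in> measurable Uspace (Mq j)" by (rule c)
    qed (auto simp: Mq_def space_pair_measure offspring_measure_def)
    then have Phim: "Phi q \<in> measurable Uspace (PiM UNIV Mq)" by simp
    have cw: "(\<lambda>\<omega>. \<omega> j) \<in> measurable (PiM UNIV Mq) (count_space UNIV)" for j
    proof -
      have "(\<lambda>\<omega>. \<omega> j) \<in> measurable (PiM UNIV Mq) (Mq j)" by simp
      then show ?thesis unfolding Mq_def by (subst (asm) measurable_cong_sets[OF refl sets_Mq])
    qed
    have integ: "(\<lambda>\<omega>. ennreal s ^ pop \<omega> t) \<in> borel_measurable (PiM UNIV Mq)"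
      unfolding pop_popF by (rule meas_via_occ[where W="\<lambda>\<omega>. \<omega>", OF cw]) simp
    have qr: "quenched_law q = distr Uspace (PiM UNIV Mq) (Phi q)"
      using quenched_repr[of q] elim by (simp only: Mq_def[abs_def])
    have "(\<integral>\<^sup>+\<omega>. ennreal (s ^ pop \<omega> t) \<partial>quenched_law q) = (\<integral>\<^sup>+\<omega>. ennreal s ^ pop \<omega> t \<partial>distr Uspace (PiM UNIV Mq) (Phi q))"
      unfolding qr using s by (simp add: ennreal_power)
    also have "\<dots> = (\<integral>\<^sup>+u. ennreal s ^ pop (Phi q u) t \<partial>Uspace)"
      by (rule nn_integral_distr[OF Phim]) (use integ in simp)
    finally show ?case .
  qed
  then show ?thesis unfolding annealed_gf_def Qm_def[symmetric] by (rule nn_integral_cong_AE)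
qed

end



context brw
begin

lemma prod_mono_ennreal:
  fixes f g :: "'a \<Rightarrow> ennreal"
  shows "(\<And>i. i \<in> A \<Longrightarrow> f i \<le> g i) \<Longrightarrow> prod f A \<le> prod g A"
  by (induct A rule: infinite_finite_induct) (auto intro!: mult_mono)

lemma inner:
  fixes aq :: "nat \<times> (int ^ 'd) \<Rightarrow> nat \<Rightarrow> real" and au :: "nat \<times> (int ^ 'd) \<times> nat \<Rightarrow> (int ^ 'd) \<times> real"
  assumes s: "0 \<le> s" "s \<le> 1"
  shows "ennreal (pgf (mean_offspring (Qm :: (nat \<times> (int ^ 'd) \<Rightarrow> nat \<Rightarrow> real) measure)) s) ^ popF (NN t aq au)
    \<le> (\<integral>\<^sup>+bq. \<integral>\<^sup>+bu. HH s t aq bq au bu \<partial>PiM (UNIV - {j. fst j < t}) (\<lambda>_. V0) \<partial>PiM (UNIV - {j. fst j < t}) (\<lambda>_. \<mu>))"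
proof -
  define n where "n = NN t aq au"
  define S where "S = {x. n x \<noteq> 0}"
  define c where "c = pgf (mean_offspring (Qm :: (nat \<times> (int ^ 'd) \<Rightarrow> nat \<Rightarrow> real) measure)) s"
  have finS: "finite S" unfolding S_def n_def NN_def by (rule finite_occ)
  define IU where "IU = (UNIV - {j :: nat \<times> (int ^ 'd) \<times> nat. fst j < t})"
  define IQ where "IQ = (UNIV - {j :: nat \<times> (int ^ 'd). fst j < t})"
  have sn: "snd \<in> measurable V0 borel"
    unfolding V0_def using measurable_snd[of Jm Unif] measurable_cong_sets[OF refl sets_Unif] by blast
  have bu_int: "(\<integral>\<^sup>+bu. HH s t aq bq au bu \<partial>PiM IU (\<lambda>_. V0)) = (\<Prod>x\<in>S. phi s (bq (t, x)) ^ n x)" for bq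
  proof -
    define D where "D = (\<lambda>(x, i). (t, x, i)) ` Sigma S (\<lambda>x. {..<n x})"
    define fj where "fj j w = ennreal s ^ Kinv (bq (t, fst (snd j))) (snd w)"
      for j :: "nat \<times> (int ^ 'd) \<times> nat" and w :: "(int ^ 'd) \<times> real"
    have inj: "inj_on (\<lambda>(x, i). (t :: nat, x :: int ^ 'd, i :: nat)) (Sigma S (\<lambda>x. {..<n x}))"
      by (auto simp: inj_on_def)
    have finSig: "finite (Sigma S (\<lambda>x. {..<n x}))" using finS by auto
    have "HH s t aq bq au bu = (\<Prod>(x, i)\<in>Sigma S (\<lambda>x. {..<n x}). ennreal s ^ Kinv (bq (t, x)) (snd (bu (t, x, i))))" for bu
      unfolding HH_def n_def[symmetric] S_def[symmetric] using finS by (simp add: prod.Sigma)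
    also have "\<dots> bu = (\<Prod>j\<in>D. fj j (bu j))" for bu
      unfolding D_def by (subst prod.reindex[OF inj]) (simp add: fj_def case_prod_unfold)
    finally have eq1: "\<And>bu. HH s t aq bq au bu = (\<Prod>j\<in>D. fj j (bu j))" .
    have "(\<integral>\<^sup>+bu. (\<Prod>j\<in>D. fj j (bu j)) \<partial>PiM IU (\<lambda>_. V0)) = (\<Prod>j\<in>D. \<integral>\<^sup>+w. fj j w \<partial>V0)"
    proof (rule prod_int_PiM)
      have "(t, 0, 0) \<in> IU" by (simp add: IU_def)
      then show "IU \<noteq> {}" by blast
      show "finite D" unfolding D_def using finSig by simp
      show "D \<subseteq> IU" unfolding D_def IU_def by auto
      fix j show "fj j \<in> borel_measurable V0"
      proof -
        have "(\<lambda>w. Kinv (bq (t, fst (snd j))) (snd w)) \<in> measurable V0 (count_space UNIV)"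
          by (rule meas_Kinv_gen[OF _ sn]) simp
        moreover have "(\<lambda>n::nat. ennreal s ^ n) \<in> measurable (count_space UNIV) borel" by simp
        ultimately show ?thesis unfolding fj_def by (rule measurable_compose)
      qed
    qed (simp add: prob_V0)
    also have "\<dots> = (\<Prod>j\<in>D. phi s (bq (t, fst (snd j))))"
    proof -
      have v: "(\<integral>\<^sup>+w. ennreal s ^ Kinv p (snd w) \<partial>V0) = phi s p" for p
        unfolding phi_def by (rule V0_snd) measurable
      show ?thesis by (intro prod.cong refl) (simp add: fj_def v)
    qed
    also have "\<dots> = (\<Prod>(x, i)\<in>Sigma S (\<lambda>x. {..<n x}). phi s (bq (t, x)))"
      unfolding D_def by (subst prod.reindex[OF inj]) (simp add: case_prod_unfold)
    also have "\<dots> = (\<Prod>x\<in>S. phi s (bq (t, x)) ^ n x)"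
      using finS by (simp add: prod.Sigma[symmetric])
    finally show ?thesis by (simp add: eq1)
  qed
  have injS: "inj_on (\<lambda>x. (t :: nat, x :: int ^ 'd)) S" by (auto simp: inj_on_def)
  have "(\<integral>\<^sup>+bq. (\<Prod>x\<in>S. phi s (bq (t, x)) ^ n x) \<partial>PiM IQ (\<lambda>_. \<mu>))
      = (\<integral>\<^sup>+bq. (\<Prod>j\<in>(\<lambda>x. (t, x)) ` S. phi s (bq j) ^ n (snd j)) \<partial>PiM IQ (\<lambda>_. \<mu>))"
    by (subst prod.reindex[OF injS]) simp
  also have "\<dots> = (\<Prod>j\<in>(\<lambda>x. (t, x)) ` S. \<integral>\<^sup>+p. phi s p ^ n (snd j) \<partial>\<mu>)"
  proof (rule prod_int_PiM)
    have "(t, 0) \<in> IQ" by (simp add: IQ_def)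
    then show "IQ \<noteq> {}" by blast
    show "finite ((\<lambda>x. (t, x)) ` S)" using finS by simp
    show "(\<lambda>x. (t, x)) ` S \<subseteq> IQ" unfolding IQ_def by auto
    fix j show "(\<lambda>p. phi s p ^ n (snd j)) \<in> borel_measurable \<mu>"
      using meas_phi by measurable
  qed (simp add: prob_mu)
  also have "\<dots> = (\<Prod>x\<in>S. \<integral>\<^sup>+p. phi s p ^ n x \<partial>\<mu>)"
    by (subst prod.reindex[OF injS]) simp
  also have "\<dots> \<ge> (\<Prod>x\<in>S. ennreal c ^ n x)"
  proof (rule prod_mono_ennreal)
    fix x assume "x \<in> S"
    have "ennreal c ^ n x = (\<integral>\<^sup>+p. phi s p \<partial>\<mu>) ^ n x"
      unfolding c_def using int_phi(1)[where 'd='d, OF s] by simp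
    also have "\<dots> \<le> (\<integral>\<^sup>+p. phi s p ^ n x \<partial>\<mu>)"
      by (rule ennreal_jensen_pow[OF prob_mu meas_phi phi_le_1[OF s]])
    finally show "ennreal c ^ n x \<le> (\<integral>\<^sup>+p. phi s p ^ n x \<partial>\<mu>)" .
  qed
  finally have "(\<Prod>x\<in>S. ennreal c ^ n x) \<le> (\<integral>\<^sup>+bq. \<integral>\<^sup>+bu. HH s t aq bq au bu \<partial>PiM IU (\<lambda>_. V0) \<partial>PiM IQ (\<lambda>_. \<mu>))"
    by (simp add: bu_int)
  moreover have "(\<Prod>x\<in>S. ennreal c ^ n x) = ennreal c ^ popF (NN t aq au)"
    by (simp add: power_sum popF_def S_def n_def)
  ultimately show ?thesis by (simp add: c_def IU_def IQ_def)
qed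

end



context brw
begin

lemma step:
  assumes s: "0 \<le> s" "s \<le> 1"
  shows "(\<integral>\<^sup>+q. \<integral>\<^sup>+u. ennreal (pgf (mean_offspring (Qm :: (nat \<times> (int ^ 'd) \<Rightarrow> nat \<Rightarrow> real) measure)) s) ^ pop (Phi q u) t \<partial>Uspace \<partial>(Qm :: (nat \<times> (int ^ 'd) \<Rightarrow> nat \<Rightarrow> real) measure))
    \<le> (\<integral>\<^sup>+q. \<integral>\<^sup>+u. ennreal s ^ pop (Phi q u) (Suc t) \<partial>Uspace \<partial>(Qm :: (nat \<times> (int ^ 'd) \<Rightarrow> nat \<Rightarrow> real) measure))"
proof -
  define c where "c = pgf (mean_offspring (Qm :: (nat \<times> (int ^ 'd) \<Rightarrow> nat \<Rightarrow> real) measure)) s"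
  define Tq where "Tq = {j :: nat \<times> (int ^ 'd). fst j < t}"
  define Tu where "Tu = {j :: nat \<times> (int ^ 'd) \<times> nat. fst j < t}"
  define PQT where "PQT = PiM Tq (\<lambda>_. \<mu>)"
  define PQB where "PQB = PiM (UNIV - Tq) (\<lambda>_. \<mu>)"
  define PUT where "PUT = PiM Tu (\<lambda>_. (V0 :: ((int ^ 'd) \<times> real) measure))"
  define PUB where "PUB = PiM (UNIV - Tu) (\<lambda>_. (V0 :: ((int ^ 'd) \<times> real) measure))"
  interpret PQT: prob_space PQT unfolding PQT_def by (intro prob_space_PiM prob_mu)
  interpret PQB: prob_space PQB unfolding PQB_def by (intro prob_space_PiM prob_mu)
  interpret PUT: prob_space PUT unfolding PUT_def by (intro prob_space_PiM prob_V0)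
  interpret PUB: prob_space PUB unfolding PUB_def by (intro prob_space_PiM prob_V0)
  interpret PQBUT: pair_sigma_finite PQB PUT ..
  have cq: "(\<lambda>x. x i) \<in> measurable PQT \<mu>" "(\<lambda>x. x i) \<in> measurable PQB \<mu>" for i
    unfolding PQT_def PQB_def by (rule coord_mu)+
  have cu: "(\<lambda>x. x i) \<in> measurable PUT V0" "(\<lambda>x. x i) \<in> measurable PUB V0" for i
    unfolding PUT_def PUB_def by (rule coord_V0)+
  note mc = measurable_compose
  have E: "(\<integral>\<^sup>+q. \<integral>\<^sup>+u. ennreal c ^ pop (Phi q u) t \<partial>Uspace \<partial>(Qm :: (nat \<times> (int ^ 'd) \<Rightarrow> nat \<Rightarrow> real) measure))
      = (\<integral>\<^sup>+aq. \<integral>\<^sup>+au. ennreal c ^ popF (NN t aq au) \<partial>PUT \<partial>PQT)"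
  proof -
    have "(\<integral>\<^sup>+u. ennreal c ^ pop (Phi q u) t \<partial>Uspace) = (\<integral>\<^sup>+au. ennreal c ^ popF (NN t (restrict q Tq) au) \<partial>PUT)" for q
    proof -
      have "(\<integral>\<^sup>+u. ennreal c ^ pop (Phi q u) t \<partial>Uspace) = (\<integral>\<^sup>+u. ennreal c ^ popF (NN t (restrict q Tq) (restrict u Tu)) \<partial>Uspace)"
        by (simp add: pop_restrict Tq_def Tu_def)
      also have "\<dots> = (\<integral>\<^sup>+au. ennreal c ^ popF (NN t (restrict q Tq) au) \<partial>PUT)"
        unfolding Uspace_def PUT_def
      proof (rule restrict_int_PiM)
        show "(\<lambda>au. ennreal c ^ popF (NN t (restrict q Tq) au)) \<in> borel_measurable (PiM Tu (\<lambda>_. V0))"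
          by (rule meas_popF_NN[where Aq="\<lambda>_. restrict q Tq" and Au="\<lambda>x. x"])
             (simp, rule cu(1)[unfolded PUT_def])
      qed (auto simp: prob_V0)
      finally show ?thesis .
    qed
    then have "(\<integral>\<^sup>+q. \<integral>\<^sup>+u. ennreal c ^ pop (Phi q u) t \<partial>Uspace \<partial>(Qm :: (nat \<times> (int ^ 'd) \<Rightarrow> nat \<Rightarrow> real) measure))
        = (\<integral>\<^sup>+q. \<integral>\<^sup>+au. ennreal c ^ popF (NN t (restrict q Tq) au) \<partial>PUT \<partial>(Qm :: (nat \<times> (int ^ 'd) \<Rightarrow> nat \<Rightarrow> real) measure))"
      by simp
    also have "\<dots> = (\<integral>\<^sup>+aq. \<integral>\<^sup>+au. ennreal c ^ popF (NN t aq au) \<partial>PUT \<partial>PQT)"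
      unfolding Qm_def PQT_def
    proof (rule restrict_int_PiM)
      have "(\<lambda>m. ennreal c ^ popF (NN t (fst m) (snd m))) \<in> borel_measurable (PQT \<Otimes>\<^sub>M PUT)"
        by (rule meas_popF_NN) (rule mc[OF measurable_fst cq(1)], rule mc[OF measurable_snd cu(1)])
      then have "case_prod (\<lambda>aq au. ennreal c ^ popF (NN t aq au)) \<in> borel_measurable (PQT \<Otimes>\<^sub>M PUT)"
        by (simp add: case_prod_beta')
      from PUT.borel_measurable_nn_integral[OF this]
      show "(\<lambda>aq. \<integral>\<^sup>+au. ennreal c ^ popF (NN t aq au) \<partial>PUT) \<in> borel_measurable (PiM Tq (\<lambda>_. \<mu>))"
        by (simp add: PQT_def)
    qed (auto simp: prob_mu)
    finally show ?thesis .
  qed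
  have A: "(\<integral>\<^sup>+q. \<integral>\<^sup>+u. ennreal s ^ pop (Phi q u) (Suc t) \<partial>Uspace \<partial>(Qm :: (nat \<times> (int ^ 'd) \<Rightarrow> nat \<Rightarrow> real) measure))
     = (\<integral>\<^sup>+q. \<integral>\<^sup>+au. \<integral>\<^sup>+bu. HH s t (restrict q Tq) (restrict q (UNIV - Tq)) au bu \<partial>PUB \<partial>PUT \<partial>(Qm :: (nat \<times> (int ^ 'd) \<Rightarrow> nat \<Rightarrow> real) measure))"
  proof (rule nn_integral_cong)
    fix q :: "nat \<times> (int ^ 'd) \<Rightarrow> nat \<Rightarrow> real"
    have "(\<integral>\<^sup>+u. ennreal s ^ pop (Phi q u) (Suc t) \<partial>Uspace)
        = (\<integral>\<^sup>+u. HH s t (restrict q Tq) (restrict q (UNIV - Tq)) (restrict u Tu) (restrict u (UNIV - Tu)) \<partial>Uspace)"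
      by (simp add: HH_eq[OF s(1)] Tq_def Tu_def)
    also have "\<dots> = (\<integral>\<^sup>+au. \<integral>\<^sup>+bu. HH s t (restrict q Tq) (restrict q (UNIV - Tq)) au bu \<partial>PUB \<partial>PUT)"
    proof -
      have hm: "(\<lambda>z. HH s t (restrict q Tq) (restrict q (UNIV - Tq)) (fst z) (snd z)) \<in> borel_measurable (PUT \<Otimes>\<^sub>M PUB)"
        by (rule meas_HH) (simp, simp, rule mc[OF measurable_fst cu(1)], rule mc[OF measurable_snd cu(2)])
      show ?thesis
        using split_PiM[of UNIV "\<lambda>_. V0" Tu "\<lambda>z. HH s t (restrict q Tq) (restrict q (UNIV - Tq)) (fst z) (snd z)"]
          hm prob_V0 by (simp add: Uspace_def PUT_def PUB_def)
    qed
    finally show "(\<integral>\<^sup>+u. ennreal s ^ pop (Phi q u) (Suc t) \<partial>Uspace)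
        = (\<integral>\<^sup>+au. \<integral>\<^sup>+bu. HH s t (restrict q Tq) (restrict q (UNIV - Tq)) au bu \<partial>PUB \<partial>PUT)" .
  qed
  have B: "(\<integral>\<^sup>+q. \<integral>\<^sup>+au. \<integral>\<^sup>+bu. HH s t (restrict q Tq) (restrict q (UNIV - Tq)) au bu \<partial>PUB \<partial>PUT \<partial>(Qm :: (nat \<times> (int ^ 'd) \<Rightarrow> nat \<Rightarrow> real) measure))
     = (\<integral>\<^sup>+aq. \<integral>\<^sup>+bq. \<integral>\<^sup>+au. \<integral>\<^sup>+bu. HH s t aq bq au bu \<partial>PUB \<partial>PUT \<partial>PQB \<partial>PQT)"
  proof -
    have m1: "(\<lambda>m. HH s t (fst (fst (fst m))) (snd (fst (fst m))) (snd (fst m)) (snd m))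
        \<in> borel_measurable (((PQT \<Otimes>\<^sub>M PQB) \<Otimes>\<^sub>M PUT) \<Otimes>\<^sub>M PUB)"
      by (rule meas_HH)
         (rule mc[OF measurable_fst mc[OF measurable_fst mc[OF measurable_fst cq(1)]]],
          rule mc[OF measurable_fst mc[OF measurable_fst mc[OF measurable_snd cq(2)]]],
          rule mc[OF measurable_fst mc[OF measurable_snd cu(1)]],
          rule mc[OF measurable_snd cu(2)])
    then have "case_prod (\<lambda>x bu. HH s t (fst (fst x)) (snd (fst x)) (snd x) bu) \<in> borel_measurable (((PQT \<Otimes>\<^sub>M PQB) \<Otimes>\<^sub>M PUT) \<Otimes>\<^sub>M PUB)"
      by (simp add: case_prod_beta')
    from PUB.borel_measurable_nn_integral[OF this]
    have "case_prod (\<lambda>z au. \<integral>\<^sup>+bu. HH s t (fst z) (snd z) au bu \<partial>PUB) \<in> borel_measurable ((PQT \<Otimes>\<^sub>M PQB) \<Otimes>\<^sub>M PUT)"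
      by (simp add: case_prod_beta')
    from PUT.borel_measurable_nn_integral[OF this]
    have hm: "(\<lambda>z. \<integral>\<^sup>+au. \<integral>\<^sup>+bu. HH s t (fst z) (snd z) au bu \<partial>PUB \<partial>PUT) \<in> borel_measurable (PQT \<Otimes>\<^sub>M PQB)" .
    show ?thesis
      using split_PiM[of UNIV "\<lambda>_. \<mu>" Tq "\<lambda>z. \<integral>\<^sup>+au. \<integral>\<^sup>+bu. HH s t (fst z) (snd z) au bu \<partial>PUB \<partial>PUT"]
        hm prob_mu by (simp add: Qm_def PQT_def PQB_def)
  qed
  have C: "(\<integral>\<^sup>+bq. \<integral>\<^sup>+au. \<integral>\<^sup>+bu. HH s t aq bq au bu \<partial>PUB \<partial>PUT \<partial>PQB)
      = (\<integral>\<^sup>+au. \<integral>\<^sup>+bq. \<integral>\<^sup>+bu. HH s t aq bq au bu \<partial>PUB \<partial>PQB \<partial>PUT)" for aq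
  proof -
    have m1: "(\<lambda>m. HH s t aq (fst (fst m)) (snd (fst m)) (snd m)) \<in> borel_measurable ((PQB \<Otimes>\<^sub>M PUT) \<Otimes>\<^sub>M PUB)"
      by (rule meas_HH)
         (simp, rule mc[OF measurable_fst mc[OF measurable_fst cq(2)]],
          rule mc[OF measurable_fst mc[OF measurable_snd cu(1)]],
          rule mc[OF measurable_snd cu(2)])
    then have "case_prod (\<lambda>x bu. HH s t aq (fst x) (snd x) bu) \<in> borel_measurable ((PQB \<Otimes>\<^sub>M PUT) \<Otimes>\<^sub>M PUB)"
      by (simp add: case_prod_beta')
    from PUB.borel_measurable_nn_integral[OF this]
    have "case_prod (\<lambda>bq au. \<integral>\<^sup>+bu. HH s t aq bq au bu \<partial>PUB) \<in> borel_measurable (PQB \<Otimes>\<^sub>M PUT)"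
      by (simp add: case_prod_beta')
    from PQBUT.Fubini'[OF this] show ?thesis by simp
  qed
  have D: "(\<integral>\<^sup>+aq. \<integral>\<^sup>+au. ennreal c ^ popF (NN t aq au) \<partial>PUT \<partial>PQT)
      \<le> (\<integral>\<^sup>+aq. \<integral>\<^sup>+au. \<integral>\<^sup>+bq. \<integral>\<^sup>+bu. HH s t aq bq au bu \<partial>PUB \<partial>PQB \<partial>PUT \<partial>PQT)"
    unfolding c_def PQB_def PUB_def Tq_def Tu_def
    by (intro nn_integral_mono inner[OF s])
  show ?thesis
    unfolding c_def[symmetric] E A B C using D by simp
qed

end



theorem lemma4p6p3:
  fixes \<mu> :: "(nat \<Rightarrow> real) measure"
    and Q :: "(nat \<times> (int ^ 'd) \<Rightarrow> nat \<Rightarrow> real) measure"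
    and s :: real and t :: nat
  assumes "prob_space \<mu>"
    and "sets \<mu> = sets (PiM UNIV (\<lambda>_::nat. (borel :: real measure)))"
    and "AE p in \<mu>. (\<forall>k. 0 \<le> p k) \<and> p sums 1"
    and "Q = PiM UNIV (\<lambda>_::nat \<times> (int ^ 'd). \<mu>)"
    and "0 \<le> s" and "s \<le> 1"
  shows "ennreal ((pgf (mean_offspring Q) ^^ t) s) \<le> annealed_gf Q t s"
proof -
  interpret brw \<mu> using assms(1-3) by (rule brw.intro)
  have QQ: "Q = Qm" using assms(4) by (simp add: Qm_def)
  define f where "f = pgf (mean_offspring Q)"
  have f01: "0 \<le> f x" "f x \<le> 1" if "0 \<le> x" "x \<le> 1" for x
    using int_phi(2,3)[OF that, where 'd='d] by (simp_all add: f_def QQ)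
  interpret PQ: prob_space Q unfolding QQ by (rule prob_Qm)
  interpret PU: prob_space "Uspace :: (nat \<times> (int ^ 'd) \<times> nat \<Rightarrow> (int ^ 'd) \<times> real) measure" by (rule prob_Uspace)
  have main: "\<And>x. 0 \<le> x \<Longrightarrow> x \<le> 1 \<Longrightarrow>
      ennreal ((f ^^ n) x) \<le> (\<integral>\<^sup>+q. \<integral>\<^sup>+u. ennreal x ^ pop (Phi q u) n \<partial>Uspace \<partial>Q)" for n
  proof (induction n)
    case 0
    have "(\<integral>\<^sup>+q. \<integral>\<^sup>+u. ennreal x ^ pop (Phi q u) 0 \<partial>Uspace \<partial>Q) = (\<integral>\<^sup>+q. \<integral>\<^sup>+u. ennreal x \<partial>(Uspace :: (nat \<times> (int ^ 'd) \<times> nat \<Rightarrow> (int ^ 'd) \<times> real) measure) \<partial>Q)"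
      by (simp only: pop_0 power_one_right)
    also have "\<dots> = ennreal x"
      by (simp only: nn_integral_const PU.emeasure_space_1 PQ.emeasure_space_1 mult_1_right)
    finally show ?case by simp
  next
    case (Suc n)
    have "ennreal ((f ^^ Suc n) x) = ennreal ((f ^^ n) (f x))" by (simp only: funpow_Suc_right comp_def)
    also have "\<dots> \<le> (\<integral>\<^sup>+q. \<integral>\<^sup>+u. ennreal (f x) ^ pop (Phi q u) n \<partial>Uspace \<partial>Q)"
      using Suc.IH[OF f01[OF Suc.prems]] .
    also have "\<dots> \<le> (\<integral>\<^sup>+q. \<integral>\<^sup>+u. ennreal x ^ pop (Phi q u) (Suc n) \<partial>Uspace \<partial>Q)"
      unfolding f_def QQ by (rule step[OF Suc.prems])
    finally show ?case .
  qed
  have "ennreal ((f ^^ t) s) \<le> (\<integral>\<^sup>+q. \<integral>\<^sup>+u. ennreal s ^ pop (Phi q u) t \<partial>Uspace \<partial>Q)"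
    by (rule main[OF assms(5,6)])
  also have "\<dots> = annealed_gf Q t s"
    unfolding QQ by (rule annealed_repr[OF assms(5), symmetric])
  finally show ?thesis by (simp add: f_def)
qed

end
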